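(* Let $p,q$ be positive integers with $q>2p$, let $j\in\{0,\dots,p-1\}$, and let $$\sum_{i=0}^{q-1}\eta_i|i\rangle=\mathrm{FT}_q\left(\sum_{i=0}^{p-1}\frac{1}{\sqrt p}\,\omega_p^{-ij}|i\rangle\right).$$ Then: (1) $|\eta_{j'}|\geq\sqrt{\frac pq}\left(1-20\frac{p^2}{q^2}\right)$; (2) for every $k\in\{0,\dots,p-1\}$ with $k\neq j$, $|\eta_{k'}|\leq\sqrt{\frac pq}\,\frac{2}{|k-j|_p}\,\frac pq$.
   Context: $\omega_N=e^{2\pi i/N}$. For a vector $\sum_{i=0}^{p-1}x_i|i\rangle$, $\mathrm{FT}_q$ maps it to $\sum_{c=0}^{q-1}\left(\frac{1}{\sqrt q}\sum_{i=0}^{p-1}\omega_q^{ic}x_i\right)|c\rangle$. For $i\in\{0,\dots,p-1\}$, $i'=\lfloor\frac qp i\rfloor$. For an integer $x$, $|x|_p=x\bmod p$ if $0\le x\bmod p\le p/2$, and $|x|_p=(-x)\bmod p$ otherwise. *)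

theory Defs
  imports Complex_Main
begin

definition omega :: "nat \<Rightarrow> complex" where
  "omega N = exp (2 * of_real pi * \<i> / of_nat N)"

text \<open>FT_q applied to a vector x supported on basis states 0..p-1; coefficient of |c>.\<close>
definition FT :: "nat \<Rightarrow> nat \<Rightarrow> (nat \<Rightarrow> complex) \<Rightarrow> nat \<Rightarrow> complex" where
  "FT q p x c = (\<Sum>i<p. omega q ^ (i * c) * x i) / of_real (sqrt (real q))"

definition prime_idx :: "nat \<Rightarrow> nat \<Rightarrow> nat \<Rightarrow> nat" where
  "prime_idx q p i = nat \<lfloor>real q / real p * real i\<rfloor>"

definition absmod :: "nat \<Rightarrow> int \<Rightarrow> int" where
  "absmod p x = (if 0 \<le> x mod int p \<and> real_of_int (x mod int p) \<le> real p / 2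
                 then x mod int p else (- x) mod int p)"

end

theory Submission imports Defs "HOL-Analysis.Complex_Transcendental" begin

lemma cos_ge_quad: "cos (x::real) \<ge> 1 - x^2/2"
proof -
  have "cos x = 1 - 2 * (sin (x/2))^2" using cos_double_sin[of "x/2"] by simp
  moreover have "(sin (x/2))^2 \<le> (x/2)^2"
    using abs_sin_x_le_abs_x[of "x/2"] by (metis abs_ge_zero power_mono power2_abs)
  ultimately show ?thesis by (simp add: power_divide)
qed

lemma sin_minus_xcos: assumes "0 \<le> t" "t \<le> pi" shows "t * cos t \<le> sin t"
proof -
  have "\<forall>s. 0 \<le> s \<and> s \<le> t \<longrightarrow> ((\<lambda>x. sin x - x * cos x) has_real_derivative s * sin s) (at s)"
    by (auto intro!: derivative_eq_intros simp: algebra_simps)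
  moreover have "\<forall>s. 0 \<le> s \<and> s \<le> t \<longrightarrow> 0 \<le> s * sin s" using assms by (auto intro!: mult_nonneg_nonneg sin_ge_zero)
  ultimately have "sin 0 - 0 * cos 0 \<le> sin t - t * cos t"
    by (intro DERIV_nonneg_imp_nondecreasing[OF assms(1)]) auto
  then show ?thesis by simp
qed

lemma sinc_mono: assumes "0 < x" "x \<le> y" "y \<le> pi" shows "sin y / y \<le> sin x / x"
proof -
  have "\<forall>s. x \<le> s \<and> s \<le> y \<longrightarrow> ((\<lambda>t. sin t / t) has_real_derivative (s * cos s - sin s) / s^2) (at s)"
    using assms by (auto intro!: derivative_eq_intros simp: power2_eq_square field_simps)
  moreover have "\<forall>s. x \<le> s \<and> s \<le> y \<longrightarrow> (s * cos s - sin s) / s^2 \<le> 0"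
    using assms sin_minus_xcos by (auto intro!: divide_nonpos_nonneg)
  ultimately show ?thesis
    by (intro DERIV_nonpos_imp_nonincreasing[OF assms(2)]) auto
qed

lemma key_ineq:
  fixes m p u :: real
  assumes m1: "1 \<le> m" and mp: "2 * m \<le> p" and u0: "0 \<le> u" and u1: "u \<le> 1/2"
  shows "m * sin (pi * u) \<le> 2 * u * p * sin (pi * (m - u) / p)"
proof (cases "u = 0")
  case True then show ?thesis by simp
next
  case False
  hence u0': "0 < u" using u0 by simp
  have p0: "p > 0" using m1 mp by simp
  define z where "z = pi * (m - u) / p"
  define z0 where "z0 = pi * (m - u) / (2 * m)"
  have zpos: "0 < z" unfolding z_def using m1 u1 p0 by (intro divide_pos_pos) auto
  have zz0: "z \<le> z0" unfolding z_def z0_def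
    using m1 u1 mp p0 by (intro divide_left_mono) auto
  have z0le: "z0 \<le> pi" unfolding z0_def using m1 u0 by (simp add: field_simps)
  have z0pos: "0 < z0" using zpos zz0 by simp
  have sm: "sin z0 / z0 \<le> sin z / z" by (rule sinc_mono[OF zpos zz0 z0le])
  have "p * sin z = pi * (m - u) * (sin z / z)" unfolding z_def using p0 m1 u1 by (simp add: field_simps)
  also have "\<dots> \<ge> pi * (m - u) * (sin z0 / z0)"
    using sm m1 u1 by (intro mult_left_mono) auto
  also have "pi * (m - u) * (sin z0 / z0) = 2 * m * sin z0"
    unfolding z0_def using m1 u1 by (simp add: field_simps)
  finally have A: "p * sin z \<ge> 2 * m * sin z0" .
  have "sin z0 = cos (pi * u / (2 * m))"
    unfolding z0_def using m1 by (simp add: sin_cos_eq field_simps)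
  also have "\<dots> \<ge> cos (pi * u / 2)"
    using m1 u0 u1 mult_right_mono[OF m1 u0] by (intro cos_monotone_0_pi_le) (auto simp: field_simps)
  finally have B: "sin z0 \<ge> cos (pi * u / 2)" .
  have pu0: "0 \<le> pi * u" using u0 by simp
  have pu1: "pi * u \<le> pi / 2" using u1 by (simp add: field_simps)
  have c0: "cos (pi * u / 2) \<ge> 0" using pu0 pu1 pi_ge_zero by (intro cos_ge_zero; linarith)
  have "sin (pi * u) = 2 * sin (pi * u / 2) * cos (pi * u / 2)"
    using sin_double[of "pi * u / 2"] by simp
  also have "\<dots> \<le> 2 * (pi * u / 2) * cos (pi * u / 2)"
    using sin_x_le_x[of "pi * u / 2"] u0 c0 by (intro mult_right_mono) auto
  also have "\<dots> \<le> 4 * u * cos (pi * u / 2)"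
    using mult_right_mono[OF less_imp_le[OF pi_less_4] u0] c0 by (intro mult_right_mono) auto
  finally have C: "sin (pi * u) \<le> 4 * u * cos (pi * u / 2)" .
  have "m * sin (pi * u) \<le> m * (4 * u * cos (pi * u / 2))"
    using C m1 by (intro mult_left_mono) auto
  also have "\<dots> \<le> m * (4 * u * sin z0)"
    using B m1 u0 by (intro mult_left_mono) auto
  also have "\<dots> = 2 * u * (2 * m * sin z0)" by simp
  also have "\<dots> \<le> 2 * u * (p * sin z)" using A u0 by (intro mult_left_mono) auto
  finally show ?thesis unfolding z_def by simp
qed

lemma cis_minus_one: "cis (2 * a) - 1 = cis a * (2 * \<i> * complex_of_real (sin a))"
proof -
  have "cos (2 * a) = 1 - 2 * sin a * sin a" using cos_double_sin[of a] by (simp add: power2_eq_square)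
  moreover have "sin (2 * a) = 2 * sin a * cos a" by (rule sin_double)
  ultimately show ?thesis by (simp add: complex_eq_iff algebra_simps)
qed

lemma norm_cis_minus_one: "cmod (cis (2 * a) - 1) = 2 * \<bar>sin a\<bar>"
  by (simp add: cis_minus_one norm_mult)

lemma geo_norm:
  fixes \<theta> :: real
  assumes "sin (pi * \<theta>) \<noteq> 0"
  shows "cmod (\<Sum>i<p. cis (2 * pi * \<theta>) ^ i) = \<bar>sin (pi * real p * \<theta>)\<bar> / \<bar>sin (pi * \<theta>)\<bar>"
proof -
  have n1: "cmod (cis (2 * pi * \<theta>) - 1) = 2 * \<bar>sin (pi * \<theta>)\<bar>"
    using norm_cis_minus_one[of "pi * \<theta>"] by (simp add: mult.assoc)
  hence z1: "cis (2 * pi * \<theta>) \<noteq> 1" using assms by auto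
  have "(\<Sum>i<p. cis (2 * pi * \<theta>) ^ i) = (cis (2 * pi * \<theta>) ^ p - 1) / (cis (2 * pi * \<theta>) - 1)"
    by (rule geometric_sum[OF z1])
  also have "cis (2 * pi * \<theta>) ^ p = cis (2 * (pi * real p * \<theta>))" unfolding Complex.DeMoivre by (simp add: algebra_simps)
  finally have "cmod (\<Sum>i<p. cis (2 * pi * \<theta>) ^ i) = cmod (cis (2 * (pi * real p * \<theta>)) - 1) / cmod (cis (2 * pi * \<theta>) - 1)"
    by (simp add: norm_divide)
  also have "\<dots> = \<bar>sin (pi * real p * \<theta>)\<bar> / \<bar>sin (pi * \<theta>)\<bar>"
    unfolding n1 norm_cis_minus_one by simp
  finally show ?thesis .
qed

lemma omega_cis: "omega N = cis (2 * pi / real N)"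
  unfolding omega_def cis_conv_exp by (simp add: mult.commute)

lemma term_eq:
  "omega q ^ (i * c) * omega p powi (- (int i * int j))
     = cis (2 * pi * (real c / real q - real j / real p)) ^ i"
proof -
  have "omega p powi (- (int i * int j)) = inverse (omega p ^ (i * j))"
    by (simp add: power_int_minus flip: of_nat_mult)
  also have "\<dots> = cis (- (real (i * j) * (2 * pi / real p)))"
    unfolding omega_cis Complex.DeMoivre by simp
  finally have a: "omega p powi (- (int i * int j)) = cis (- (real (i * j) * (2 * pi / real p)))" .
  have b: "omega q ^ (i * c) = cis (real (i * c) * (2 * pi / real q))"
    unfolding omega_cis Complex.DeMoivre by simp
  show ?thesis unfolding a b cis_mult Complex.DeMoivre
    by (simp add: algebra_simps diff_divide_distrib)
qed

lemma eta_norm: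
  assumes "p > 0" "q > 0"
  shows "cmod (FT q p (\<lambda>i. omega p powi (- (int i * int j)) / of_real (sqrt (real p))) c)
     = cmod (\<Sum>i<p. cis (2 * pi * (real c / real q - real j / real p)) ^ i) / (sqrt (real p) * sqrt (real q))"
proof -
  have "(\<Sum>i<p. omega q ^ (i * c) * (omega p powi (- (int i * int j)) / of_real (sqrt (real p))))
      = (\<Sum>i<p. cis (2 * pi * (real c / real q - real j / real p)) ^ i) / of_real (sqrt (real p))"
    unfolding sum_divide_distrib
  proof (rule sum.cong[OF refl])
    fix i show "omega q ^ (i * c) * (omega p powi (- (int i * int j)) / of_real (sqrt (real p)))
      = cis (2 * pi * (real c / real q - real j / real p)) ^ i / of_real (sqrt (real p))"
      using term_eq[of q i c p j] by (metis times_divide_eq_right)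
  qed
  then show ?thesis unfolding FT_def using assms
    by (simp add: norm_divide norm_mult)
qed

lemma part1_sum:
  fixes \<theta> :: real
  assumes "q > 0" "\<bar>\<theta>\<bar> \<le> 1 / real q"
  shows "cmod (\<Sum>i<p. cis (2 * pi * \<theta>) ^ i) \<ge> real p * (1 - 20 * real p ^ 2 / real q ^ 2)"
proof -
  have pi2: "2 * pi^2 \<le> 20"
  proof -
    have p3: "pi \<le> 3.15" using pi_approx(2) by simp
    have "pi * pi \<le> 3.15 * 3.15" using p3 pi_ge_zero by (intro mult_mono) auto
    then show ?thesis by (simp add: power2_eq_square)
  qed
  have each: "cos (real i * (2 * pi * \<theta>)) \<ge> 1 - 20 * real p ^ 2 / real q ^ 2" if "i < p" for i
  proof -
    have ti: "\<bar>real i * \<theta>\<bar> \<le> real p / real q"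
    proof -
      have "\<bar>real i * \<theta>\<bar> = real i * \<bar>\<theta>\<bar>" by (simp add: abs_mult)
      also have "\<dots> \<le> real p * (1 / real q)" using that assms by (intro mult_mono) auto
      finally show ?thesis by simp
    qed
    have sq: "(real i * \<theta>)^2 \<le> (real p / real q)^2"
      using ti by (metis abs_ge_zero power2_abs power_mono)
    have c: "cos (real i * (2 * pi * \<theta>)) \<ge> 1 - (real i * (2 * pi * \<theta>))^2 / 2" by (rule cos_ge_quad)
    have "(real i * (2 * pi * \<theta>))^2 / 2 = 2 * pi^2 * (real i * \<theta>)^2"
      by (simp add: power_mult_distrib)
    also have "\<dots> \<le> 20 * (real p / real q)^2"
      using pi2 sq by (intro mult_mono) auto
    finally show ?thesis using c by (simp add: power_divide)
  qed
  have "Re (\<Sum>i<p. cis (2 * pi * \<theta>) ^ i) = (\<Sum>i<p. cos (real i * (2 * pi * \<theta>)))"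
    by (simp add: Complex.DeMoivre)
  also have "\<dots> \<ge> (\<Sum>i<p. 1 - 20 * real p ^ 2 / real q ^ 2)"
    using each by (intro sum_mono) auto
  finally have "Re (\<Sum>i<p. cis (2 * pi * \<theta>) ^ i) \<ge> real p * (1 - 20 * real p ^ 2 / real q ^ 2)" by simp
  then show ?thesis using complex_Re_le_cmod order_trans by blast
qed

lemma absmod_cases:
  fixes n :: int
  assumes "n \<noteq> 0" "\<bar>n\<bar> < int p"
  shows "(n > 0 \<and> 2 * n \<le> int p \<and> absmod p n = n) \<or> (n > 0 \<and> 2 * n > int p \<and> absmod p n = int p - n)
    \<or> (n < 0 \<and> 2 * (int p + n) \<le> int p \<and> absmod p n = int p + n)
    \<or> (n < 0 \<and> 2 * (int p + n) > int p \<and> absmod p n = - n)"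
proof (cases "n > 0")
  case True
  have m1: "n mod int p = n" using True assms by simp
  have m2: "(- n) mod int p = int p - n" using True assms by (simp add: zmod_zminus1_eq_if m1)
  show ?thesis unfolding absmod_def m1 m2 using True
    by (auto simp: field_simps)
next
  case False
  hence neg: "n < 0" using assms by simp
  have m2: "(- n) mod int p = - n" using neg assms by simp
  have m1: "n mod int p = int p + n" using zmod_zminus1_eq_if[of "-n" "int p"] m2 neg by simp
  show ?thesis unfolding absmod_def m1 m2 using neg assms
    by (auto simp: field_simps)
qed

lemma sin_ge_aux:
  fixes a b :: real
  assumes "0 \<le> b" "b \<le> a" "a \<le> pi - b"
  shows "sin b \<le> sin a"
proof (cases "a \<le> pi / 2")
  case True then show ?thesis using assms by (intro sin_monotone_2pi_le) auto
next
  case False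
  have "sin b \<le> sin (pi - a)" using assms False by (intro sin_monotone_2pi_le) auto
  then show ?thesis by simp
qed

lemma absmod_sin:
  fixes n :: int and u :: real
  assumes "n \<noteq> 0" "\<bar>n\<bar> < int p" "0 \<le> u" "u \<le> 1/2"
  defines "m \<equiv> real_of_int (absmod p n)"
  shows "1 \<le> m \<and> 2 * m \<le> real p \<and> 0 < sin (pi * (m - u) / real p)
     \<and> sin (pi * (m - u) / real p) \<le> \<bar>sin (pi * (real_of_int n - u) / real p)\<bar>"
proof -
  have C: "(n > 0 \<and> 2 * n \<le> int p \<and> absmod p n = n) \<or> (n > 0 \<and> 2 * n > int p \<and> absmod p n = int p - n)
    \<or> (n < 0 \<and> 2 * (int p + n) \<le> int p \<and> absmod p n = int p + n)
    \<or> (n < 0 \<and> 2 * (int p + n) > int p \<and> absmod p n = - n)"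
    using absmod_cases[OF assms(1,2)] .
  have m1: "1 \<le> m" and m2: "2 * m \<le> real p"
    using C assms(2) unfolding m_def by (auto simp flip: of_int_le_iff)
  have p0: "real p > 0" using m1 m2 by simp
  have b0: "0 < pi * (m - u) / real p" using m1 assms p0 by (intro divide_pos_pos) auto
  have bh: "pi * (m - u) / real p \<le> pi / 2"
  proof -
    have "pi * (m - u) \<le> pi * (real p / 2)" using m2 assms by (intro mult_left_mono) auto
    then show ?thesis using p0 by (simp add: field_simps)
  qed
  have pos: "0 < sin (pi * (m - u) / real p)" using b0 bh pi_gt_zero by (intro sin_gt_zero) linarith+
  have plus: "sin (pi * (m - u) / real p) \<le> sin (pi * (m + u) / real p)"
  proof (rule sin_ge_aux)
    show "pi * (m - u) / real p \<le> pi * (m + u) / real p" using assms p0 by (intro divide_right_mono) auto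
    have "pi * (m + u) + pi * (m - u) \<le> pi * real p" using m2 by (simp add: algebra_simps)
    then show "pi * (m + u) / real p \<le> pi - pi * (m - u) / real p" using p0 by (simp add: field_simps)
  qed (use b0 in auto)
  have "\<bar>sin (pi * (real_of_int n - u) / real p)\<bar> = sin (pi * (m - u) / real p)
      \<or> \<bar>sin (pi * (real_of_int n - u) / real p)\<bar> = \<bar>sin (pi * (m + u) / real p)\<bar>"
  proof -
    consider (a) "absmod p n = n" | (b) "absmod p n = int p - n" | (c) "absmod p n = int p + n" | (d) "absmod p n = - n"
      using C by blast
    then show ?thesis
    proof cases
      case a then show ?thesis using pos unfolding m_def by simp
    next
      case b
      have "pi * (real_of_int n - u) / real p = pi - pi * (m + u) / real p"
        unfolding m_def b using p0 by (simp add: field_simps)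
      then show ?thesis by simp
    next
      case c
      have "pi * (real_of_int n - u) / real p = pi * (m - u) / real p - pi"
        unfolding m_def c using p0 by (simp add: field_simps)
      then show ?thesis using pos by (simp add: sin_diff)
    next
      case d
      have "pi * (real_of_int n - u) / real p = - (pi * (m + u) / real p)"
        unfolding m_def d using p0 by (simp add: field_simps)
      then show ?thesis by simp
    qed
  qed
  then show ?thesis using m1 m2 pos plus by auto
qed

lemma sqrt_helper: assumes "p > 0" "q > 0" shows "real p / (sqrt (real p) * sqrt (real q)) = sqrt (real p / real q)"
proof -
  have "real p = sqrt (real p) * sqrt (real p)" by simp
  then have "real p / (sqrt (real p) * sqrt (real q)) = sqrt (real p) / sqrt (real q)"
    using assms by (metis mult_divide_mult_cancel_left_if real_sqrt_eq_zero_cancel_iff of_nat_eq_0_iff not_less0 neq0_conv)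
  then show ?thesis by (simp add: real_sqrt_divide)
qed

lemma floor_facts:
  assumes "p > 0" "q > 0"
  shows "real (prime_idx q p k) \<le> real q / real p * real k \<and> real q / real p * real k < real (prime_idx q p k) + 1"
proof -
  have nn: "0 \<le> real q / real p * real k" by simp
  have "real (prime_idx q p k) = real_of_int \<lfloor>real q / real p * real k\<rfloor>"
    unfolding prime_idx_def using nn by simp
  then show ?thesis by linarith
qed

theorem claim1:
  fixes p q j :: nat and \<eta> :: "nat \<Rightarrow> complex"
  assumes "p > 0" and "q > 0" and "q > 2 * p" and "j < p"
    and "\<eta> = FT q p (\<lambda>i. omega p powi (- (int i * int j)) / of_real (sqrt (real p)))"
  shows "cmod (\<eta> (prime_idx q p j)) \<ge> sqrt (real p / real q) * (1 - 20 * real p ^ 2 / real q ^ 2)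
    \<and> (\<forall>k<p. k \<noteq> j \<longrightarrow> cmod (\<eta> (prime_idx q p k))
           \<le> sqrt (real p / real q) * (2 / real_of_int (absmod p (int k - int j))) * (real p / real q))"
proof
  note pq = assms(1,2)
  have sp: "sqrt (real p) * sqrt (real q) > 0" using pq by simp
  have eta: "cmod (\<eta> c) = cmod (\<Sum>i<p. cis (2 * pi * (real c / real q - real j / real p)) ^ i) / (sqrt (real p) * sqrt (real q))" for c
    unfolding assms(5) by (rule eta_norm[OF pq])
  show "cmod (\<eta> (prime_idx q p j)) \<ge> sqrt (real p / real q) * (1 - 20 * real p ^ 2 / real q ^ 2)"
  proof -
    define c where "c = prime_idx q p j"
    have f: "real c \<le> real q / real p * real j" "real q / real p * real j < real c + 1"
      using floor_facts[OF pq, of j] unfolding c_def by auto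
    have "\<bar>real c / real q - real j / real p\<bar> \<le> 1 / real q"
    proof -
      have e: "real c / real q - real j / real p = (real c - real q / real p * real j) / real q"
        using pq by (simp add: field_simps)
      have "\<bar>real c - real q / real p * real j\<bar> \<le> 1" using f by linarith
      then show ?thesis unfolding e using pq by (simp add: abs_divide divide_right_mono)
    qed
    from part1_sum[OF pq(2) this, of p]
    have "cmod (\<Sum>i<p. cis (2 * pi * (real c / real q - real j / real p)) ^ i) / (sqrt (real p) * sqrt (real q))
       \<ge> real p * (1 - 20 * real p ^ 2 / real q ^ 2) / (sqrt (real p) * sqrt (real q))"
      using sp by (intro divide_right_mono) auto
    also have "real p * (1 - 20 * real p ^ 2 / real q ^ 2) / (sqrt (real p) * sqrt (real q))
       = sqrt (real p / real q) * (1 - 20 * real p ^ 2 / real q ^ 2)"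
      using sqrt_helper[OF pq] by (metis times_divide_eq_left mult.commute)
    finally show ?thesis unfolding eta c_def .
  qed
  show "\<forall>k<p. k \<noteq> j \<longrightarrow> cmod (\<eta> (prime_idx q p k))
           \<le> sqrt (real p / real q) * (2 / real_of_int (absmod p (int k - int j))) * (real p / real q)"
  proof (intro allI impI)
    fix k assume kp: "k < p" and kj: "k \<noteq> j"
    define c where "c = prime_idx q p k"
    define n where "n = int k - int j"
    define m where "m = real_of_int (absmod p n)"
    define \<delta> where "\<delta> = real q / real p * real k - real c"
    define u where "u = real p * \<delta> / real q"
    have f: "real c \<le> real q / real p * real k" "real q / real p * real k < real c + 1"
      using floor_facts[OF pq, of k] unfolding c_def by auto
    have d0: "0 \<le> \<delta>" and d1: "\<delta> < 1" using f unfolding \<delta>_def by auto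
    have u0: "0 \<le> u" unfolding u_def using d0 by simp
    have upq: "u \<le> real p / real q" unfolding u_def using d1 pq by (simp add: divide_right_mono)
    have pq2: "real p / real q \<le> 1/2" using assms(3) pq by (simp add: field_simps)
    have u1: "u \<le> 1/2" using upq pq2 by linarith
    have th: "real c / real q - real j / real p = (real_of_int n - u) / real p"
      unfolding n_def u_def \<delta>_def using pq by (simp add: field_simps)
    have n0: "n \<noteq> 0" and np: "\<bar>n\<bar> < int p" unfolding n_def using kp kj assms(4) by auto
    from absmod_sin[OF n0 np u0 u1]
    have A: "1 \<le> m" "2 * m \<le> real p" "0 < sin (pi * (m - u) / real p)"
       "sin (pi * (m - u) / real p) \<le> \<bar>sin (pi * (real_of_int n - u) / real p)\<bar>"
      unfolding m_def by auto
    have s1: "sin (pi * ((real_of_int n - u) / real p)) \<noteq> 0" using A by auto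
    have num: "\<bar>sin (pi * real p * ((real_of_int n - u) / real p))\<bar> = sin (pi * u)"
    proof -
      have e: "pi * real p * ((real_of_int n - u) / real p) = pi * real_of_int n - pi * u" using pq by (simp add: field_simps)
      have "(cos (pi * real_of_int n))^2 = 1" using sin_cos_squared_add[of "pi * real_of_int n"] by simp
      hence "\<bar>cos (pi * real_of_int n)\<bar> = 1" by (simp add: power2_eq_1_iff abs_if split: if_splits) 
      moreover have "sin (pi * u) \<ge> 0" using u0 u1 by (intro sin_ge_zero) auto
      ultimately show ?thesis unfolding e sin_diff by (simp add: abs_mult)
    qed
    have "cmod (\<Sum>i<p. cis (2 * pi * (real c / real q - real j / real p)) ^ i)
        = sin (pi * u) / \<bar>sin (pi * ((real_of_int n - u) / real p))\<bar>"
      unfolding th geo_norm[OF s1] num ..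
    also have "\<dots> \<le> sin (pi * u) / sin (pi * (m - u) / real p)"
      using A u0 u1 by (intro divide_left_mono) (auto intro!: sin_ge_zero mult_pos_pos)
    also have "\<dots> \<le> 2 * u * real p / m"
    proof -
      have "m * sin (pi * u) \<le> 2 * u * real p * sin (pi * (m - u) / real p)"
        by (rule key_ineq[OF A(1) A(2) u0 u1])
      then show ?thesis using A by (simp add: field_simps)
    qed
    also have "\<dots> \<le> 2 * (real p / real q) * real p / m"
      using upq A by (intro divide_right_mono mult_right_mono) auto
    finally have S: "cmod (\<Sum>i<p. cis (2 * pi * (real c / real q - real j / real p)) ^ i) \<le> 2 * (real p / real q) * real p / m" .
    have "cmod (\<eta> c) \<le> (2 * (real p / real q) * real p / m) / (sqrt (real p) * sqrt (real q))"
      unfolding eta using S sp by (intro divide_right_mono) auto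
    also have "\<dots> = (real p / (sqrt (real p) * sqrt (real q))) * (2 / m) * (real p / real q)"
      by (simp add: field_simps)
    also have "\<dots> = sqrt (real p / real q) * (2 / m) * (real p / real q)"
      unfolding sqrt_helper[OF pq] ..
    finally show "cmod (\<eta> (prime_idx q p k))
           \<le> sqrt (real p / real q) * (2 / real_of_int (absmod p (int k - int j))) * (real p / real q)"
      unfolding c_def m_def n_def .
  qed
qed

end
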